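(* Let $f\in\mathcal{A}$. If $\left|\left(\frac{f(z)}{z}\right)'\right|<\frac12$ for all $z\in\Delta\setminus\{0\}$, then $f\in\Omega$. Moreover the constant $\tfrac12$ cannot be replaced by any larger constant: for every $\lambda>\tfrac12$, the function $\widehat f_\lambda(z)=z+\lambda z^2$ satisfies $\left(\widehat f_\lambda(z)/z\right)'=\lambda$ but $\widehat f_\lambda\notin\Omega$.
   Context: $\Delta=\{z\in\mathbb{C}:|z|<1\}$. $\mathcal{A}$ is the class of functions $f$ analytic in $\Delta$ with $f(0)=0$, $f'(0)=1$. $\Omega$ is the class of $f\in\mathcal{A}$ with $|zf'(z)-f(z)|<\tfrac12$ for all $z\in\Delta$. *)

theory Defs
  imports "HOL-Complex_Analysis.Complex_Analysis"
begin

definition classA :: "(complex \<Rightarrow> complex) set" where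
  "classA = {f. f analytic_on ball 0 1 \<and> f 0 = 0 \<and> deriv f 0 = 1}"

definition classOmega :: "(complex \<Rightarrow> complex) set" where
  "classOmega = {f. f \<in> classA \<and>
      (\<forall>z\<in>ball 0 1. cmod (z * deriv f z - f z) < 1/2)}"

end

theory Submission
  imports Defs
begin

lemma part1:
  assumes fA: "f \<in> classA"
    and H: "\<forall>z \<in> ball 0 1 - {0}. cmod (deriv (\<lambda>w. f w / w) z) < 1/2"
  shows "f \<in> classOmega"
proof -
  have an: "f analytic_on ball 0 1" and f0: "f 0 = 0" using fA by (auto simp: classA_def)
  have "cmod (z * deriv f z - f z) < 1/2" if z: "z \<in> ball 0 1" for z
  proof (cases "z = 0")
    case True then show ?thesis using f0 by simp
  next
    case False
    have "f field_differentiable at z"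
      using an z analytic_on_imp_differentiable_at by blast
    then have d: "(f has_field_derivative deriv f z) (at z)"
      using DERIV_deriv_iff_field_differentiable by blast
    have "((\<lambda>w. f w / w) has_field_derivative (deriv f z * z - f z * 1) / (z * z)) (at z)"
      by (rule DERIV_divide[OF d DERIV_ident False])
    then have e: "deriv (\<lambda>w. f w / w) z = (deriv f z * z - f z) / (z * z)"
      by (simp add: DERIV_imp_deriv)
    have "cmod ((deriv f z * z - f z) / (z * z)) < 1/2"
      using H z False e by (metis DiffI singletonD)
    then have "cmod (z * deriv f z - f z) < 1/2 * (cmod z * cmod z)"
      using False by (simp add: norm_divide norm_mult field_simps mult.commute)
    also have "\<dots> \<le> 1/2"
      using z by (simp add: mult_le_one)
    finally show ?thesis .
  qed
  then show ?thesis using fA by (auto simp: classOmega_def)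
qed

theorem lemma4p1:
  shows "(\<forall>f \<in> classA.
            (\<forall>z \<in> ball 0 1 - {0}. cmod (deriv (\<lambda>w. f w / w) z) < 1/2)
            \<longrightarrow> f \<in> classOmega)
       \<and> (\<forall>lam::real. lam > 1/2 \<longrightarrow>
            (\<lambda>z. z + complex_of_real lam * z^2) \<in> classA
          \<and> (\<forall>z \<in> ball 0 1 - {0}.
               deriv (\<lambda>w. (w + complex_of_real lam * w^2) / w) z = complex_of_real lam)
          \<and> (\<lambda>z. z + complex_of_real lam * z^2) \<notin> classOmega)"
proof (intro conjI allI impI ballI)
  fix f assume "f \<in> classA" "\<forall>z \<in> ball 0 1 - {0}. cmod (deriv (\<lambda>w. f w / w) z) < 1/2"
  then show "f \<in> classOmega" by (rule part1)
next
  fix lam :: real assume lam: "lam > 1/2"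
  let ?f = "\<lambda>z. z + complex_of_real lam * z^2"
  have df: "\<And>z. (?f has_field_derivative 1 + 2 * complex_of_real lam * z) (at z)"
    by (auto intro!: derivative_eq_intros)
  have deq: "\<And>z. deriv ?f z = 1 + 2 * complex_of_real lam * z"
    using df DERIV_imp_deriv by blast
  show A: "?f \<in> classA"
    unfolding classA_def using deq by (auto intro!: analytic_intros)
  {
    fix z :: complex assume z: "z \<in> ball 0 1 - {0}"
    then have nz: "z \<noteq> 0" by auto
    have "((\<lambda>w. ?f w / w) has_field_derivative
           ((1 + 2 * complex_of_real lam * z) * z - ?f z * 1) / (z * z)) (at z)"
      by (rule DERIV_divide[OF df DERIV_ident nz])
    moreover have "((1 + 2 * complex_of_real lam * z) * z - ?f z * 1) / (z * z) = complex_of_real lam"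
      using nz by (simp add: field_simps power2_eq_square)
    ultimately show "deriv (\<lambda>w. ?f w / w) z = complex_of_real lam"
      using DERIV_imp_deriv by metis
  }
  show "?f \<notin> classOmega"
  proof
    assume "?f \<in> classOmega"
    then have H: "\<forall>z\<in>ball 0 1. cmod (z * deriv ?f z - ?f z) < 1/2"
      by (auto simp: classOmega_def)
    define r where "r = sqrt (1 / (2 * lam))"
    have r0: "r \<ge> 0" using lam by (simp add: r_def)
    have r2: "r^2 = 1 / (2 * lam)" using lam unfolding r_def by (subst real_sqrt_pow2) simp_all
    have "r^2 < 1^2" using r2 lam by (simp add: divide_less_eq)
    then have "r < 1" using r0 by (smt (verit) power_mono)
    then have "complex_of_real r \<in> ball 0 1" using r0 by simp
    with H have "cmod (complex_of_real r * deriv ?f (complex_of_real r) - ?f (complex_of_real r)) < 1/2"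
      by blast
    moreover have "complex_of_real r * deriv ?f (complex_of_real r) - ?f (complex_of_real r)
        = complex_of_real (lam * r^2)"
      by (simp only: deq) (simp add: field_simps power2_eq_square)
    moreover have "lam * r^2 = 1/2" using r2 lam by simp
    ultimately show False by simp
  qed
qed

end
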